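(* Let $0<p<1$, $q=1-p$, and let $c$ be the circle centered at the origin with radius $r$, $0<r<\frac{-1+\sqrt{1+4pq}}{2q}$. Let $X=(x_1,\dots,x_N)$, $Y=(y_1,\dots,y_N)\in\mathbb{Z}^N$ with $x_1<\cdots<x_N$, $y_1<\cdots<y_N$ and $x_i\ge y_i$ for all $i$. Let $\sigma\in S_N$, $\sigma\neq\mathrm{Id}$, and for each inversion $(\beta,\alpha)$ of $\sigma$ choose $E_{\beta\alpha}$ to be one of $S_{\beta\alpha},P_{\beta\alpha},Q_{\beta\alpha},pT_{\beta\alpha},qT_{\beta\alpha},0$. Then $$\int_c\cdots\int_c\Big(\prod_{(\beta,\alpha)}E_{\beta\alpha}\Big)\prod_{i=1}^N\xi_{\sigma(i)}^{x_i-y_{\sigma(i)}-1}\,d\xi_1\cdots d\xi_N=0,$$ where the product is over all inversions $(\beta,\alpha)$ of $\sigma$.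
   Context: An inversion of $\sigma$ is a pair $(\beta,\alpha)$ with $\beta>\alpha$ such that $\beta$ appears to the left of $\alpha$ in the word $\sigma(1)\cdots\sigma(N)$. For nonzero complex $\xi_\alpha,\xi_\beta$, with $D=p+q\xi_\alpha\xi_\beta-\xi_\alpha$: $S_{\beta\alpha}=-\frac{p+q\xi_\alpha\xi_\beta-\xi_\beta}{D}$, $P_{\beta\alpha}=\frac{(p-q\xi_\alpha)(\xi_\beta-1)}{D}$, $Q_{\beta\alpha}=\frac{(p-q\xi_\beta)(\xi_\alpha-1)}{D}$, $T_{\beta\alpha}=\frac{\xi_\beta-\xi_\alpha}{D}$. *)

theory Defs
  imports "HOL-Complex_Analysis.Complex_Analysis" "HOL-Combinatorics.Permutations"
begin

definition inversions :: "(nat \<Rightarrow> nat) \<Rightarrow> nat \<Rightarrow> (nat \<times> nat) set" where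
  "inversions \<sigma> N = {(\<beta>, \<alpha>). \<exists>i j. 1 \<le> i \<and> i < j \<and> j \<le> N \<and> \<sigma> i = \<beta> \<and> \<sigma> j = \<alpha> \<and> \<alpha> < \<beta>}"

definition Dden :: "real \<Rightarrow> real \<Rightarrow> complex \<Rightarrow> complex \<Rightarrow> complex" where
  "Dden p q xa xb = of_real p + of_real q * xa * xb - xa"

definition Sfac :: "real \<Rightarrow> real \<Rightarrow> complex \<Rightarrow> complex \<Rightarrow> complex" where
  "Sfac p q xa xb = - (of_real p + of_real q * xa * xb - xb) / Dden p q xa xb"

definition Pfac :: "real \<Rightarrow> real \<Rightarrow> complex \<Rightarrow> complex \<Rightarrow> complex" where
  "Pfac p q xa xb = (of_real p - of_real q * xa) * (xb - 1) / Dden p q xa xb"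

definition Qfac :: "real \<Rightarrow> real \<Rightarrow> complex \<Rightarrow> complex \<Rightarrow> complex" where
  "Qfac p q xa xb = (of_real p - of_real q * xb) * (xa - 1) / Dden p q xa xb"

definition Tfac :: "real \<Rightarrow> real \<Rightarrow> complex \<Rightarrow> complex \<Rightarrow> complex" where
  "Tfac p q xa xb = (xb - xa) / Dden p q xa xb"

datatype echoice = ChS | ChP | ChQ | ChpT | ChqT | ChZero

text \<open>E_{beta alpha} as a function of xi_alpha (xa) and xi_beta (xb).\<close>
fun Efac :: "real \<Rightarrow> real \<Rightarrow> echoice \<Rightarrow> complex \<Rightarrow> complex \<Rightarrow> complex" where
  "Efac p q ChS xa xb = Sfac p q xa xb"
| "Efac p q ChP xa xb = Pfac p q xa xb"
| "Efac p q ChQ xa xb = Qfac p q xa xb"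
| "Efac p q ChpT xa xb = of_real p * Tfac p q xa xb"
| "Efac p q ChqT xa xb = of_real q * Tfac p q xa xb"
| "Efac p q ChZero xa xb = 0"

text \<open>Iterated contour integral over the counterclockwise circle of radius r centred at 0
  in the variables xi_1, ..., xi_n (xi_1 innermost, xi_n outermost).\<close>
fun iter_cint :: "real \<Rightarrow> nat \<Rightarrow> ((nat \<Rightarrow> complex) \<Rightarrow> complex) \<Rightarrow> complex" where
  "iter_cint r 0 F = F (\<lambda>_. 0)"
| "iter_cint r (Suc n) F =
     contour_integral (circlepath 0 r) (\<lambda>z. iter_cint r n (\<lambda>\<xi>. F (\<xi>(Suc n := z))))"

end

theory Submission imports Defs begin

lemma ci_rmul: "contour_integral g (\<lambda>x. f x * c) = contour_integral g f * c"
proof (cases "c = 0")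
  case False
  show ?thesis
  proof (cases "f contour_integrable_on g")
    case True then show ?thesis by (rule contour_integral_rmul)
  next
    case nf: False
    then have "\<not> (\<lambda>x. f x * c) contour_integrable_on g"
      using contour_integrable_rmul_iff[OF False] by blast
    then show ?thesis using nf by (simp add: not_integrable_contour_integral)
  qed
qed simp

lemma iter_cint_rmul: "iter_cint r m (\<lambda>\<xi>. f \<xi> * c) = iter_cint r m f * c"
proof (induction m arbitrary: f)
  case 0 then show ?case by simp
next
  case (Suc m)
  show ?case by (simp add: Suc.IH ci_rmul)
qed

lemma iter_cint_cong:
  assumes "0 \<le> r"
    and "\<And>\<xi>. (\<forall>j. norm (\<xi> j) \<le> r) \<Longrightarrow> (\<forall>j. j \<notin> {1..m} \<longrightarrow> \<xi> j = 0) \<Longrightarrow> f \<xi> = g \<xi>"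
  shows "iter_cint r m f = iter_cint r m g"
  using assms(2)
proof (induction m arbitrary: f g)
  case 0
  have "f (\<lambda>_. 0) = g (\<lambda>_. 0)" by (rule 0) (use assms(1) in auto)
  then show ?case by simp
next
  case (Suc m)
  show ?case
    unfolding iter_cint.simps
  proof (rule contour_integral_eq)
    fix z assume z: "z \<in> path_image (circlepath 0 r)"
    then have nz: "norm z = r" using assms(1) by simp
    show "iter_cint r m (\<lambda>\<xi>. f (\<xi>(Suc m := z))) = iter_cint r m (\<lambda>\<xi>. g (\<xi>(Suc m := z)))"
    proof (rule Suc.IH)
      fix \<xi> :: "nat \<Rightarrow> complex"
      assume a: "\<forall>j. norm (\<xi> j) \<le> r" "\<forall>j. j \<notin> {1..m} \<longrightarrow> \<xi> j = 0"
      show "f (\<xi>(Suc m := z)) = g (\<xi>(Suc m := z))"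
        by (rule Suc.prems) (use a nz in auto)
    qed
  qed
qed

lemma iter_cint_zero:
  assumes r: "0 \<le> r" and k: "1 \<le> k" "k \<le> n"
    and hF: "\<And>\<xi>. (\<forall>j. norm (\<xi> j) \<le> r) \<Longrightarrow> F \<xi> = A \<xi> * G \<xi>"
    and hA: "\<And>\<xi> \<xi>'. (\<forall>j\<in>{1..<k}. \<xi> j = \<xi>' j) \<Longrightarrow> A \<xi> = A \<xi>'"
    and hG: "\<And>\<xi> \<xi>'. (\<forall>j. j \<notin> {1..<k} \<longrightarrow> \<xi> j = \<xi>' j) \<Longrightarrow> G \<xi> = G \<xi>'"
    and hI: "\<And>\<xi>. (\<forall>j. norm (\<xi> j) \<le> r) \<Longrightarrow> contour_integral (circlepath 0 r) (\<lambda>z. G (\<xi>(k:=z))) = 0"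
  shows "iter_cint r n F = 0"
  using k hF hA hG hI
proof (induction n arbitrary: F A G)
  case 0 then show ?case by (metis le_zero_eq not_one_le_zero)
next
  case (Suc n)
  show ?case
  proof (cases "k = Suc n")
    case True
    have "contour_integral (circlepath 0 r) (\<lambda>z. iter_cint r n (\<lambda>\<xi>. F (\<xi>(Suc n := z))))
        = contour_integral (circlepath 0 r) (\<lambda>z. iter_cint r n A * G ((\<lambda>_. 0)(k := z)))"
    proof (rule contour_integral_eq)
      fix z assume z: "z \<in> path_image (circlepath 0 r)"
      then have nz: "norm z = r" using r by simp
      have "iter_cint r n (\<lambda>\<xi>. F (\<xi>(Suc n := z))) = iter_cint r n (\<lambda>\<xi>. A \<xi> * G ((\<lambda>_. 0)(k := z)))"
      proof (rule iter_cint_cong[OF r])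
        fix \<xi> :: "nat \<Rightarrow> complex"
        assume a: "\<forall>j. norm (\<xi> j) \<le> r" "\<forall>j. j \<notin> {1..n} \<longrightarrow> \<xi> j = 0"
        have "F (\<xi>(Suc n := z)) = A (\<xi>(Suc n := z)) * G (\<xi>(Suc n := z))"
          by (rule Suc.prems(3)) (use a nz in auto)
        also have "A (\<xi>(Suc n := z)) = A \<xi>"
          by (rule Suc.prems(4)) (use True in auto)
        also have "G (\<xi>(Suc n := z)) = G ((\<lambda>_. 0)(k := z))"
          by (rule Suc.prems(5)) (use True a in auto)
        finally show "F (\<xi>(Suc n := z)) = A \<xi> * G ((\<lambda>_. 0)(k := z))" .
      qed
      also have "\<dots> = iter_cint r n A * G ((\<lambda>_. 0)(k := z))"
        by (rule iter_cint_rmul)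
      finally show "iter_cint r n (\<lambda>\<xi>. F (\<xi>(Suc n := z))) = iter_cint r n A * G ((\<lambda>_. 0)(k := z))" .
    qed
    also have "\<dots> = iter_cint r n A * contour_integral (circlepath 0 r) (\<lambda>z. G ((\<lambda>_. 0)(k := z)))"
      using ci_rmul[of _ "\<lambda>z. G ((\<lambda>_. 0)(k := z))" "iter_cint r n A"] by (simp add: mult.commute)
    also have "contour_integral (circlepath 0 r) (\<lambda>z. G ((\<lambda>_. 0)(k := z))) = 0"
      by (rule Suc.prems(6)) (use r in auto)
    then have "iter_cint r n A * contour_integral (circlepath 0 r) (\<lambda>z. G ((\<lambda>_. 0)(k := z))) = 0"
      by simp
    finally show ?thesis by simp
  next
    case False
    then have kn: "k \<le> n" using Suc.prems(2) by simp
    show ?thesis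
      unfolding iter_cint.simps
    proof (rule contour_integral_eq_0)
      fix z assume z: "z \<in> path_image (circlepath 0 r)"
      then have nz: "norm z = r" using r by simp
      have kne: "k \<noteq> Suc n" using False .
      show "iter_cint r n (\<lambda>\<xi>. F (\<xi>(Suc n := z))) = 0"
      proof (rule Suc.IH[where A="\<lambda>\<xi>. A (\<xi>(Suc n := z))" and G="\<lambda>\<xi>. G (\<xi>(Suc n := z))"])
        show "1 \<le> k" "k \<le> n" using Suc.prems(1) kn by auto
      next
        fix \<xi> :: "nat \<Rightarrow> complex" assume a: "\<forall>j. norm (\<xi> j) \<le> r"
        show "F (\<xi>(Suc n := z)) = A (\<xi>(Suc n := z)) * G (\<xi>(Suc n := z))"
          by (rule Suc.prems(3)) (use a nz in auto)
      next
        fix \<xi> \<xi>' :: "nat \<Rightarrow> complex" assume a: "\<forall>j\<in>{1..<k}. \<xi> j = \<xi>' j"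
        show "A (\<xi>(Suc n := z)) = A (\<xi>'(Suc n := z))"
          by (rule Suc.prems(4)) (use a in auto)
      next
        fix \<xi> \<xi>' :: "nat \<Rightarrow> complex" assume a: "\<forall>j. j \<notin> {1..<k} \<longrightarrow> \<xi> j = \<xi>' j"
        show "G (\<xi>(Suc n := z)) = G (\<xi>'(Suc n := z))"
          by (rule Suc.prems(5)) (use a in auto)
      next
        fix \<xi> :: "nat \<Rightarrow> complex" assume a: "\<forall>j. norm (\<xi> j) \<le> r"
        have "(\<lambda>w. G (\<xi>(k := w, Suc n := z))) = (\<lambda>w. G ((\<xi>(Suc n := z))(k := w)))"
        proof
          fix w
          have "\<xi>(k := w, Suc n := z) = (\<xi>(Suc n := z))(k := w)"
            using kne by (auto simp: fun_eq_iff)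
          then show "G (\<xi>(k := w, Suc n := z)) = G ((\<xi>(Suc n := z))(k := w))" by simp
        qed
        moreover have "contour_integral (circlepath 0 r) (\<lambda>w. G ((\<xi>(Suc n := z))(k := w))) = 0"
          by (rule Suc.prems(6)) (use a nz in auto)
        ultimately show "contour_integral (circlepath 0 r) (\<lambda>w. G (\<xi>(k := w, Suc n := z))) = 0"
          by simp
      qed
    qed
  qed
qed

lemma Dden_nz:
  assumes q: "0 < q" and r: "0 \<le> r" and key: "q * r^2 + r < p"
    and u: "norm u \<le> r" and v: "norm v \<le> r"
  shows "Dden p q u v \<noteq> 0"
proof
  assume D: "Dden p q u v = 0"
  have eq: "Dden p q u v = of_real p + u * (of_real q * v - 1)"
    unfolding Dden_def by (simp add: algebra_simps)
  have n1: "norm (of_real q * v - 1) \<le> q * r + 1"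
  proof -
    have "norm (of_real q * v - 1) \<le> norm (of_real q * v) + norm (1::complex)"
      by (rule norm_triangle_ineq4)
    also have "\<dots> = q * norm v + 1" using q by (simp add: norm_mult)
    also have "\<dots> \<le> q * r + 1" using q v by (simp add: mult_left_mono)
    finally show ?thesis .
  qed
  have "norm (u * (of_real q * v - 1)) \<le> r * (q * r + 1)"
    unfolding norm_mult by (rule mult_mono) (use u n1 r in auto)
  also have "\<dots> < p" using key by (simp add: algebra_simps power2_eq_square)
  finally have lt: "norm (u * (of_real q * v - 1)) < p" .
  from D eq have "u * (of_real q * v - 1) = - of_real p" by (simp add: eq_neg_iff_add_eq_0 add.commute)
  then have "norm (u * (of_real q * v - 1)) = \<bar>p\<bar>" by simp
  with lt show False by simp
qed

lemma Efac_holo: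
  assumes "f1 holomorphic_on S" "f2 holomorphic_on S"
    and "\<And>z. z \<in> S \<Longrightarrow> Dden p q (f1 z) (f2 z) \<noteq> 0"
  shows "(\<lambda>z. Efac p q e (f1 z) (f2 z)) holomorphic_on S"
proof -
  have "(\<lambda>z. Dden p q (f1 z) (f2 z)) holomorphic_on S"
    unfolding Dden_def by (intro holomorphic_intros assms)
  then show ?thesis using assms
    by (cases e) (auto simp: Sfac_def Pfac_def Qfac_def Tfac_def intro!: holomorphic_intros)
qed

lemma upd_holo: "(\<lambda>z. (\<xi>(k := z)) a) holomorphic_on S"
  by (cases "a = k") (auto intro: holomorphic_intros)

theorem mainTheorem5:
  fixes p q r :: real and N :: nat and x y :: "nat \<Rightarrow> int"
    and \<sigma> :: "nat \<Rightarrow> nat" and E :: "nat \<times> nat \<Rightarrow> echoice"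
  assumes "0 < p" and "p < 1" and "q = 1 - p"
    and "0 < r" and "r < (-1 + sqrt (1 + 4 * p * q)) / (2 * q)"
    and "\<forall>i j. 1 \<le> i \<and> i < j \<and> j \<le> N \<longrightarrow> x i < x j"
    and "\<forall>i j. 1 \<le> i \<and> i < j \<and> j \<le> N \<longrightarrow> y i < y j"
    and "\<forall>i\<in>{1..N}. x i \<ge> y i"
    and "\<sigma> permutes {1..N}" and "\<sigma> \<noteq> id"
  shows "iter_cint r N (\<lambda>\<xi>.
           (\<Prod>(\<beta>, \<alpha>)\<in>inversions \<sigma> N. Efac p q (E (\<beta>, \<alpha>)) (\<xi> \<alpha>) (\<xi> \<beta>)) *
           (\<Prod>i\<in>{1..N}. \<xi> (\<sigma> i) powi (x i - y (\<sigma> i) - 1))) = 0"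
proof -
  note perm = assms(9)
  have q: "0 < q" using assms(2,3) by simp
  have r0: "0 \<le> r" using assms(4) by simp
  have key: "q * r^2 + r < p"
  proof -
    have "2 * q * r + 1 < sqrt (1 + 4 * p * q)"
      using assms(5) q by (simp add: field_simps)
    moreover have "0 \<le> 2 * q * r + 1" using q r0 by simp
    ultimately have "(2 * q * r + 1)^2 < (sqrt (1 + 4 * p * q))^2"
      by (rule power_strict_mono) auto
    also have "\<dots> = 1 + 4 * p * q" using assms(1) q by simp
    finally have "q * (q * r^2 + r) < q * p" by (simp add: algebra_simps power2_eq_square)
    then show ?thesis using q by simp
  qed
  have Dnz: "\<And>u v. norm u \<le> r \<Longrightarrow> norm v \<le> r \<Longrightarrow> Dden p q u v \<noteq> 0"
    using Dden_nz[OF q r0 key] by blast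
  have inj: "inj \<sigma>" using permutes_inj[OF perm] .
  obtain k0 where k0: "\<sigma> k0 \<noteq> k0" using assms(10) by (metis eq_id_iff)
  define k where "k = (LEAST k. \<sigma> k \<noteq> k)"
  have sk: "\<sigma> k \<noteq> k" unfolding k_def using k0 by (rule LeastI)
  have fixd: "\<And>j. j < k \<Longrightarrow> \<sigma> j = j" unfolding k_def using not_less_Least by blast
  have kin: "k \<in> {1..N}" using sk permutes_not_in[OF perm] by blast
  obtain i0 where i0: "\<sigma> i0 = k" using permutes_inverses(1)[OF perm] by metis
  have i0k: "k < i0"
  proof -
    have "i0 \<noteq> k" using i0 sk by auto
    moreover have "\<not> i0 < k" using fixd i0 by fastforce
    ultimately show ?thesis by simp
  qed
  have i0in: "i0 \<in> {1..N}" using i0 i0k permutes_not_in[OF perm] by fastforce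
  define e where "e i = x i - y (\<sigma> i) - 1" for i
  have e0: "0 \<le> e i0"
  proof -
    have "x k < x i0" using assms(6) kin i0in i0k by auto
    moreover have "y k \<le> x k" using assms(8) kin by auto
    ultimately show ?thesis unfolding e_def i0 by simp
  qed
  have sge: "\<And>i. k \<le> i \<Longrightarrow> k \<le> \<sigma> i"
  proof (rule ccontr)
    fix i assume a: "k \<le> i" "\<not> k \<le> \<sigma> i"
    then have "\<sigma> (\<sigma> i) = \<sigma> i" using fixd by simp
    then have "\<sigma> i = i" using inj by (simp add: inj_eq)
    with a show False by simp
  qed
  have invk: "\<And>b a. (b, a) \<in> inversions \<sigma> N \<Longrightarrow> k \<le> a \<and> k \<le> b"
  proof -
    fix b a assume "(b, a) \<in> inversions \<sigma> N"
    then obtain i j where ij: "1 \<le> i" "i < j" "j \<le> N" "\<sigma> i = b" "\<sigma> j = a" "a < b"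
      unfolding inversions_def by blast
    have "k \<le> a"
    proof (rule ccontr)
      assume "\<not> k \<le> a"
      then have "\<sigma> a = a" using fixd by simp
      then have "j = a" using ij inj by (metis inj_eq)
      then have "\<sigma> i = i" using fixd ij \<open>\<not> k \<le> a\<close> by simp
      then show False using ij \<open>j = a\<close> by simp
    qed
    then show "k \<le> a \<and> k \<le> b" using ij by simp
  qed
  define A where "A \<xi> = (\<Prod>i\<in>{1..<k}. \<xi> (\<sigma> i) powi e i)" for \<xi> :: "nat \<Rightarrow> complex"
  define G where "G \<xi> = (\<Prod>(\<beta>, \<alpha>)\<in>inversions \<sigma> N. Efac p q (E (\<beta>, \<alpha>)) (\<xi> \<alpha>) (\<xi> \<beta>)) *
           (\<Prod>i\<in>{k..N}. \<xi> (\<sigma> i) powi e i)" for \<xi> :: "nat \<Rightarrow> complex"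
  show ?thesis
  proof (rule iter_cint_zero[OF r0, of k N _ A G])
    show "1 \<le> k" "k \<le> N" using kin by auto
  next
    fix \<xi> :: "nat \<Rightarrow> complex"
    have split: "{1..N} = {1..<k} \<union> {k..N}" using kin by auto
    have "(\<Prod>i\<in>{1..N}. \<xi> (\<sigma> i) powi (x i - y (\<sigma> i) - 1))
        = (\<Prod>i\<in>{1..<k}. \<xi> (\<sigma> i) powi e i) * (\<Prod>i\<in>{k..N}. \<xi> (\<sigma> i) powi e i)"
      unfolding split e_def by (rule prod.union_disjoint) auto
    then show "(\<Prod>(\<beta>, \<alpha>)\<in>inversions \<sigma> N. Efac p q (E (\<beta>, \<alpha>)) (\<xi> \<alpha>) (\<xi> \<beta>)) *
           (\<Prod>i\<in>{1..N}. \<xi> (\<sigma> i) powi (x i - y (\<sigma> i) - 1)) = A \<xi> * G \<xi>"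
      unfolding A_def G_def by (simp add: ac_simps)
  next
    fix \<xi> \<xi>' :: "nat \<Rightarrow> complex"
    assume a: "\<forall>j\<in>{1..<k}. \<xi> j = \<xi>' j"
    show "A \<xi> = A \<xi>'" unfolding A_def
      by (rule prod.cong) (use a fixd in auto)
  next
    fix \<xi> \<xi>' :: "nat \<Rightarrow> complex"
    assume a: "\<forall>j. j \<notin> {1..<k} \<longrightarrow> \<xi> j = \<xi>' j"
    have 1: "(\<Prod>(\<beta>, \<alpha>)\<in>inversions \<sigma> N. Efac p q (E (\<beta>, \<alpha>)) (\<xi> \<alpha>) (\<xi> \<beta>))
        = (\<Prod>(\<beta>, \<alpha>)\<in>inversions \<sigma> N. Efac p q (E (\<beta>, \<alpha>)) (\<xi>' \<alpha>) (\<xi>' \<beta>))"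
    proof (rule prod.cong)
      fix pr assume "pr \<in> inversions \<sigma> N"
      then obtain b c where pr: "pr = (b, c)" "(b, c) \<in> inversions \<sigma> N" by (cases pr) auto
      then have "k \<le> c" "k \<le> b" using invk by auto
      then show "(case pr of (\<beta>, \<alpha>) \<Rightarrow> Efac p q (E (\<beta>, \<alpha>)) (\<xi> \<alpha>) (\<xi> \<beta>))
               = (case pr of (\<beta>, \<alpha>) \<Rightarrow> Efac p q (E (\<beta>, \<alpha>)) (\<xi>' \<alpha>) (\<xi>' \<beta>))"
        using a pr by auto
    qed simp
    have 2: "(\<Prod>i\<in>{k..N}. \<xi> (\<sigma> i) powi e i) = (\<Prod>i\<in>{k..N}. \<xi>' (\<sigma> i) powi e i)"
    proof (rule prod.cong)
      fix i assume "i \<in> {k..N}"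
      then have "k \<le> \<sigma> i" using sge by auto
      then show "\<xi> (\<sigma> i) powi e i = \<xi>' (\<sigma> i) powi e i" using a by auto
    qed simp
    show "G \<xi> = G \<xi>'" unfolding G_def 1 2 ..
  next
    fix \<xi> :: "nat \<Rightarrow> complex"
    assume a: "\<forall>j. norm (\<xi> j) \<le> r"
    have nb: "\<And>z j. z \<in> cball 0 r \<Longrightarrow> norm ((\<xi>(k := z)) j) \<le> r"
      using a by auto
    have holo: "(\<lambda>z. G (\<xi>(k := z))) holomorphic_on cball 0 r"
      unfolding G_def
    proof (intro holomorphic_on_mult holomorphic_on_prod)
      fix pr assume "pr \<in> inversions \<sigma> N"
      obtain b c where pr: "pr = (b, c)" by (cases pr)
      have "(\<lambda>z. Efac p q (E (b, c)) ((\<xi>(k := z)) c) ((\<xi>(k := z)) b)) holomorphic_on cball 0 r"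
        by (rule Efac_holo[OF upd_holo upd_holo]) (use Dnz nb in auto)
      then show "(\<lambda>z. case pr of (\<beta>, \<alpha>) \<Rightarrow> Efac p q (E (\<beta>, \<alpha>)) ((\<xi>(k := z)) \<alpha>) ((\<xi>(k := z)) \<beta>))
              holomorphic_on cball 0 r" using pr by simp
    next
      fix i assume "i \<in> {k..N}"
      show "(\<lambda>z. (\<xi>(k := z)) (\<sigma> i) powi e i) holomorphic_on cball 0 r"
      proof (cases "\<sigma> i = k")
        case True
        then have "i = i0" using i0 inj by (metis inj_eq)
        then have "0 \<le> e i" using e0 by simp
        then show ?thesis using True by (auto intro!: holomorphic_intros)
      next
        case False
        then show ?thesis by (auto intro!: holomorphic_intros)
      qed
    qed
    have "((\<lambda>z. G (\<xi>(k := z))) has_contour_integral 0) (circlepath 0 r)"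
      by (rule Cauchy_theorem_convex_simple[OF holo]) (use r0 in auto)
    then show "contour_integral (circlepath 0 r) (\<lambda>z. G (\<xi>(k := z))) = 0"
      by (rule contour_integral_unique)
  qed
qed

end
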